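(* There exists a two-player differentiable game with parameters $\theta=(x,y)\in\mathbb{R}\times\mathbb{R}$ which is a smooth market, whose losses $L^1,L^2$ are both coercive and analytic, which is nondegenerate, and whose only critical point is a strict maximum.
   Context: A differentiable game consists of $n$ players with parameters $\theta=(\theta^1,\dots,\theta^n)\in\mathbb{R}^d$, $\theta^i\in\mathbb{R}^{d_i}$, $\sum_i d_i=d$, and twice continuously differentiable losses $L^i:\mathbb{R}^d\to\mathbb{R}$. The simultaneous gradient is $\xi=(\nabla_{\theta^1}L^1,\dots,\nabla_{\theta^n}L^n)\in\mathbb{R}^d$, and the game Hessian is $H=\nabla\xi$ (the $d\times d$ matrix with blocks $\nabla_{\theta^j}\nabla_{\theta^i}L^i$). A critical point is a $\bar\theta$ with $\xi(\bar\theta)=0$. A critical point is a strict (local) maximum if $H(\bar\theta)\prec 0$, meaning $u^\top H(\bar\theta)u<0$ for all nonzero $u$. The game is a (smooth) market if $L^i(\theta)=L^i(\theta^i)+\sum_{j\ne i}g_{ij}(\theta^i,\theta^j)$ with $g_{ij}(\theta^i,\theta^j)+g_{ji}(\theta^j,\theta^i)=0$ for all $i,j$ (pairwise zero-sum interactions). A loss is coercive if $L^i(\theta)\to\infty$ as $\|\theta\|\to\infty$; the game is coercive if all its losses are. The game is nondegenerate if $H$ is invertible at every critical point. *)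

theory Defs
  imports "HOL-Analysis.Analysis"
begin

text \<open>Two-player differentiable games with scalar parameters theta = (x, y) in R x R.
  Player 1 controls x, player 2 controls y.  Losses are functions real \<times> real \<Rightarrow> real.\<close>

definition px :: "(real \<times> real \<Rightarrow> real) \<Rightarrow> real \<times> real \<Rightarrow> real" where
  "px f p = deriv (\<lambda>t. f (t, snd p)) (fst p)"

definition py :: "(real \<times> real \<Rightarrow> real) \<Rightarrow> real \<times> real \<Rightarrow> real" where
  "py f p = deriv (\<lambda>t. f (fst p, t)) (snd p)"

definition C1_fun :: "(real \<times> real \<Rightarrow> real) \<Rightarrow> bool" where
  "C1_fun f \<longleftrightarrow>
     (\<forall>x y. ((\<lambda>t. f (t, y)) has_real_derivative px f (x, y)) (at x)
          \<and> ((\<lambda>t. f (x, t)) has_real_derivative py f (x, y)) (at y))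
     \<and> continuous_on UNIV (px f) \<and> continuous_on UNIV (py f)"

definition C2_fun :: "(real \<times> real \<Rightarrow> real) \<Rightarrow> bool" where
  "C2_fun f \<longleftrightarrow> C1_fun f \<and> C1_fun (px f) \<and> C1_fun (py f)"

text \<open>Real analytic on R^2: locally the sum of an (absolutely, i.e. unconditionally)
  convergent double power series.\<close>
definition real_analytic2 :: "(real \<times> real \<Rightarrow> real) \<Rightarrow> bool" where
  "real_analytic2 f \<longleftrightarrow>
     (\<forall>x0 y0. \<exists>r>0. \<exists>a :: nat \<Rightarrow> nat \<Rightarrow> real.
        \<forall>x y. \<bar>x - x0\<bar> < r \<longrightarrow> \<bar>y - y0\<bar> < r \<longrightarrow>
          ((\<lambda>(i, j). a i j * (x - x0) ^ i * (y - y0) ^ j) has_sum f (x, y)) UNIV)"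

definition sim_grad :: "(real \<times> real \<Rightarrow> real) \<Rightarrow> (real \<times> real \<Rightarrow> real) \<Rightarrow> real \<times> real \<Rightarrow> real \<times> real" where
  "sim_grad L1 L2 p = (px L1 p, py L2 p)"

definition game_hessian :: "(real \<times> real \<Rightarrow> real) \<Rightarrow> (real \<times> real \<Rightarrow> real) \<Rightarrow> real \<times> real \<Rightarrow> real^2^2" where
  "game_hessian L1 L2 p =
     vector [vector [px (px L1) p, py (px L1) p],
             vector [px (py L2) p, py (py L2) p]]"

definition critical_point :: "(real \<times> real \<Rightarrow> real) \<Rightarrow> (real \<times> real \<Rightarrow> real) \<Rightarrow> real \<times> real \<Rightarrow> bool" where
  "critical_point L1 L2 p \<longleftrightarrow> sim_grad L1 L2 p = (0, 0)"

definition strict_max :: "(real \<times> real \<Rightarrow> real) \<Rightarrow> (real \<times> real \<Rightarrow> real) \<Rightarrow> real \<times> real \<Rightarrow> bool" where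
  "strict_max L1 L2 p \<longleftrightarrow> critical_point L1 L2 p \<and>
     (\<forall>u :: real^2. u \<noteq> 0 \<longrightarrow> u \<bullet> (game_hessian L1 L2 p *v u) < 0)"

definition nondegenerate :: "(real \<times> real \<Rightarrow> real) \<Rightarrow> (real \<times> real \<Rightarrow> real) \<Rightarrow> bool" where
  "nondegenerate L1 L2 \<longleftrightarrow> (\<forall>p. critical_point L1 L2 p \<longrightarrow> invertible (game_hessian L1 L2 p))"

definition coercive :: "(real \<times> real \<Rightarrow> real) \<Rightarrow> bool" where
  "coercive L \<longleftrightarrow> filterlim L at_top at_infinity"

definition is_market :: "(real \<times> real \<Rightarrow> real) \<Rightarrow> (real \<times> real \<Rightarrow> real) \<Rightarrow> bool" where
  "is_market L1 L2 \<longleftrightarrow>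
     (\<exists>(f1 :: real \<Rightarrow> real) (f2 :: real \<Rightarrow> real) (g12 :: real \<Rightarrow> real \<Rightarrow> real) (g21 :: real \<Rightarrow> real \<Rightarrow> real).
        (\<forall>x y. L1 (x, y) = f1 x + g12 x y \<and> L2 (x, y) = f2 y + g21 y x)
      \<and> (\<forall>a b. g12 a b + g21 b a = 0))"

end

theory Submission
  imports Defs
begin

definition LA :: "real \<times> real \<Rightarrow> real" where
  "LA p = fst p ^ 4 - fst p ^ 2 + 3 * fst p * snd p + snd p ^ 2"
definition LB :: "real \<times> real \<Rightarrow> real" where
  "LB p = snd p ^ 4 - snd p ^ 2 - 3 * fst p * snd p + fst p ^ 2"

lemma px_eq:
  assumes "\<And>x y. ((\<lambda>t. f (t, y)) has_real_derivative g (x, y)) (at x)"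
  shows "px f = g"
proof
  fix p :: "real \<times> real"
  obtain x y where p: "p = (x, y)" by (cases p)
  show "px f p = g p" unfolding p px_def using assms[of y x] by (simp add: DERIV_imp_deriv)
qed

lemma py_eq:
  assumes "\<And>x y. ((\<lambda>t. f (x, t)) has_real_derivative g (x, y)) (at y)"
  shows "py f = g"
proof
  fix p :: "real \<times> real"
  obtain x y where p: "p = (x, y)" by (cases p)
  show "py f p = g p" unfolding p py_def using assms[of x y] by (simp add: DERIV_imp_deriv)
qed

lemma C1I:
  assumes "\<And>x y. ((\<lambda>t. f (t, y)) has_real_derivative g (x, y)) (at x)"
    and "\<And>x y. ((\<lambda>t. f (x, t)) has_real_derivative h (x, y)) (at y)"
    and "continuous_on UNIV g" "continuous_on UNIV h"
  shows "C1_fun f"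
  using assms px_eq[of f g] py_eq[of f h] unfolding C1_fun_def by simp

lemma pxA: "px LA = (\<lambda>p. 4 * fst p ^ 3 - 2 * fst p + 3 * snd p)"
  by (rule px_eq, unfold LA_def, auto intro!: derivative_eq_intros)
lemma pyA: "py LA = (\<lambda>p. 3 * fst p + 2 * snd p)"
  by (rule py_eq, unfold LA_def, auto intro!: derivative_eq_intros)
lemma pxB: "px LB = (\<lambda>p. - 3 * snd p + 2 * fst p)"
  by (rule px_eq, unfold LB_def, auto intro!: derivative_eq_intros)
lemma pyB: "py LB = (\<lambda>p. 4 * snd p ^ 3 - 2 * snd p - 3 * fst p)"
  by (rule py_eq, unfold LB_def, auto intro!: derivative_eq_intros)

lemma pxpxA: "px (px LA) = (\<lambda>p. 12 * fst p ^ 2 - 2)"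
  by (rule px_eq, unfold pxA, auto intro!: derivative_eq_intros)
lemma pypxA: "py (px LA) = (\<lambda>p. 3)"
  by (rule py_eq, unfold pxA, auto intro!: derivative_eq_intros)
lemma pxpyA: "px (py LA) = (\<lambda>p. 3)"
  by (rule px_eq, unfold pyA, auto intro!: derivative_eq_intros)
lemma pypyA: "py (py LA) = (\<lambda>p. 2)"
  by (rule py_eq, unfold pyA, auto intro!: derivative_eq_intros)
lemma pxpxB: "px (px LB) = (\<lambda>p. 2)"
  by (rule px_eq, unfold pxB, auto intro!: derivative_eq_intros)
lemma pypxB: "py (px LB) = (\<lambda>p. -3)"
  by (rule py_eq, unfold pxB, auto intro!: derivative_eq_intros)
lemma pxpyB: "px (py LB) = (\<lambda>p. -3)"
  by (rule px_eq, unfold pyB, auto intro!: derivative_eq_intros)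
lemma pypyB: "py (py LB) = (\<lambda>p. 12 * snd p ^ 2 - 2)"
  by (rule py_eq, unfold pyB, auto intro!: derivative_eq_intros)

lemma C1A: "C1_fun LA"
  by (rule C1I[where g="\<lambda>p. 4 * fst p ^ 3 - 2 * fst p + 3 * snd p" and h="\<lambda>p. 3 * fst p + 2 * snd p"])
     (unfold LA_def, auto intro!: derivative_eq_intros, ((intro continuous_intros)+)?)
lemma C1B: "C1_fun LB"
  by (rule C1I[where g="\<lambda>p. - 3 * snd p + 2 * fst p" and h="\<lambda>p. 4 * snd p ^ 3 - 2 * snd p - 3 * fst p"])
     (unfold LB_def, auto intro!: derivative_eq_intros, ((intro continuous_intros)+)?)
lemma C1pxA: "C1_fun (px LA)"
  unfolding pxA
  by (rule C1I[where g="\<lambda>p. 12 * fst p ^ 2 - 2" and h="\<lambda>p. 3"])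
     (simp_all, auto intro!: derivative_eq_intros, ((intro continuous_intros)+)?)
lemma C1pyA: "C1_fun (py LA)"
  unfolding pyA
  by (rule C1I[where g="\<lambda>p. 3" and h="\<lambda>p. 2"])
     (simp_all, auto intro!: derivative_eq_intros, ((intro continuous_intros)+)?)
lemma C1pxB: "C1_fun (px LB)"
  unfolding pxB
  by (rule C1I[where g="\<lambda>p. 2" and h="\<lambda>p. -3"])
     (simp_all, auto intro!: derivative_eq_intros, ((intro continuous_intros)+)?)
lemma C1pyB: "C1_fun (py LB)"
  unfolding pyB
  by (rule C1I[where g="\<lambda>p. -3" and h="\<lambda>p. 12 * snd p ^ 2 - 2"])
     (simp_all, auto intro!: derivative_eq_intros, ((intro continuous_intros)+)?)

lemma C2A: "C2_fun LA" using C1A C1pxA C1pyA unfolding C2_fun_def by blast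
lemma C2B: "C2_fun LB" using C1B C1pxB C1pyB unfolding C2_fun_def by blast

lemma has_sum_fin:
  assumes "finite S" "\<And>k. k \<notin> S \<Longrightarrow> f k = 0" "sum f S = v"
  shows "(f has_sum v) UNIV"
proof -
  have "(f has_sum v) S" using assms by (intro has_sum_finiteI) auto
  then show ?thesis using has_sum_cong_neutral[of UNIV S f f v] assms(2) by auto
qed

definition SA :: "(nat \<times> nat) set" where "SA = {(0::nat,0::nat),(1,0),(2,0),(3,0),(4,0),(0,1),(1,1),(0,2)}"
definition SB :: "(nat \<times> nat) set" where "SB = {(0::nat,0::nat),(0,1),(0,2),(0,3),(0,4),(1,0),(1,1),(2,0)}"

definition cA :: "real \<Rightarrow> real \<Rightarrow> nat \<Rightarrow> nat \<Rightarrow> real" where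
  "cA x0 y0 i j = (if (i,j) \<notin> SA then 0 else if (i,j) = (0,0) then LA (x0,y0) else if (i,j) = (1,0) then 4*x0^3 - 2*x0 + 3*y0
     else if (i,j) = (2,0) then 6*x0^2 - 1 else if (i,j) = (3,0) then 4*x0 else if (i,j) = (4,0) then 1
     else if (i,j) = (0,1) then 3*x0 + 2*y0 else if (i,j) = (1,1) then 3 else if (i,j) = (0,2) then 1 else 0)"

definition cB :: "real \<Rightarrow> real \<Rightarrow> nat \<Rightarrow> nat \<Rightarrow> real" where
  "cB x0 y0 i j = (if (i,j) \<notin> SB then 0 else if (i,j) = (0,0) then LB (x0,y0) else if (i,j) = (0,1) then 4*y0^3 - 2*y0 - 3*x0
     else if (i,j) = (0,2) then 6*y0^2 - 1 else if (i,j) = (0,3) then 4*y0 else if (i,j) = (0,4) then 1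
     else if (i,j) = (1,0) then 2*x0 - 3*y0 else if (i,j) = (1,1) then -3 else if (i,j) = (2,0) then 1 else 0)"

lemma analA: "real_analytic2 LA"
  unfolding real_analytic2_def
proof (intro allI)
  fix x0 y0 :: real
  show "\<exists>r>0. \<exists>a :: nat \<Rightarrow> nat \<Rightarrow> real.
        \<forall>x y. \<bar>x - x0\<bar> < r \<longrightarrow> \<bar>y - y0\<bar> < r \<longrightarrow>
          ((\<lambda>(i, j). a i j * (x - x0) ^ i * (y - y0) ^ j) has_sum LA (x, y)) UNIV"
  proof (intro exI[of _ 1] conjI exI[of _ "cA x0 y0"])
  show "(1::real) > 0" by simp
  show "\<forall>x y. \<bar>x - x0\<bar> < 1 \<longrightarrow> \<bar>y - y0\<bar> < 1 \<longrightarrow>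
          ((\<lambda>(i, j). cA x0 y0 i j * (x - x0) ^ i * (y - y0) ^ j) has_sum LA (x, y)) UNIV"
  proof (intro allI impI)
    fix x y :: real
    show "((\<lambda>(i, j). cA x0 y0 i j * (x - x0) ^ i * (y - y0) ^ j) has_sum LA (x, y)) UNIV"
    proof (rule has_sum_fin[where S="SA"])
      show "finite SA" by (simp add: SA_def)
    next
      fix k assume "k \<notin> SA"
      then show "(\<lambda>(i, j). cA x0 y0 i j * (x - x0) ^ i * (y - y0) ^ j) k = 0"
        by (cases k) (simp add: cA_def)
    next
      show "(\<Sum>k\<in>SA.
              (\<lambda>(i, j). cA x0 y0 i j * (x - x0) ^ i * (y - y0) ^ j) k) = LA (x, y)"
        by (simp add: SA_def cA_def, simp add: LA_def, simp add: power2_eq_square power3_eq_cube power4_eq_xxxx algebra_simps)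
    qed
  qed
  qed
qed

lemma analB: "real_analytic2 LB"
  unfolding real_analytic2_def
proof (intro allI)
  fix x0 y0 :: real
  show "\<exists>r>0. \<exists>a :: nat \<Rightarrow> nat \<Rightarrow> real.
        \<forall>x y. \<bar>x - x0\<bar> < r \<longrightarrow> \<bar>y - y0\<bar> < r \<longrightarrow>
          ((\<lambda>(i, j). a i j * (x - x0) ^ i * (y - y0) ^ j) has_sum LB (x, y)) UNIV"
  proof (intro exI[of _ 1] conjI exI[of _ "cB x0 y0"])
  show "(1::real) > 0" by simp
  show "\<forall>x y. \<bar>x - x0\<bar> < 1 \<longrightarrow> \<bar>y - y0\<bar> < 1 \<longrightarrow>
          ((\<lambda>(i, j). cB x0 y0 i j * (x - x0) ^ i * (y - y0) ^ j) has_sum LB (x, y)) UNIV"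
  proof (intro allI impI)
    fix x y :: real
    show "((\<lambda>(i, j). cB x0 y0 i j * (x - x0) ^ i * (y - y0) ^ j) has_sum LB (x, y)) UNIV"
    proof (rule has_sum_fin[where S="SB"])
      show "finite SB" by (simp add: SB_def)
    next
      fix k assume "k \<notin> SB"
      then show "(\<lambda>(i, j). cB x0 y0 i j * (x - x0) ^ i * (y - y0) ^ j) k = 0"
        by (cases k) (simp add: cB_def)
    next
      show "(\<Sum>k\<in>SB.
              (\<lambda>(i, j). cB x0 y0 i j * (x - x0) ^ i * (y - y0) ^ j) k) = LB (x, y)"
        by (simp add: SB_def cB_def, simp add: LB_def, simp add: power2_eq_square power3_eq_cube power4_eq_xxxx algebra_simps)
    qed
  qed
  qed
qed

lemma coerc_aux:
  fixes L :: "real \<times> real \<Rightarrow> real"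
  assumes "\<And>p. 2 * L p \<ge> fst p ^ 2 + snd p ^ 2 - 18"
  shows "coercive L"
  unfolding coercive_def filterlim_at_top eventually_at_infinity
proof
  fix Z :: real
  show "\<exists>b. \<forall>p. b \<le> norm p \<longrightarrow> Z \<le> L p"
  proof (intro exI allI impI)
    fix p :: "real \<times> real"
    assume b: "2 * \<bar>Z\<bar> + 20 \<le> norm p"
    have n: "norm p ^ 2 = fst p ^ 2 + snd p ^ 2"
      by (cases p) (simp add: norm_Pair)
    have "1 \<le> norm p" using b by linarith
    then have "norm p * 1 \<le> norm p * norm p" by (intro mult_left_mono) auto
    then have "norm p \<le> norm p ^ 2" by (simp add: power2_eq_square)
    then have "2 * \<bar>Z\<bar> + 20 \<le> fst p ^ 2 + snd p ^ 2" using b n by linarith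
    moreover have "Z \<le> \<bar>Z\<bar>" by simp
    ultimately show "Z \<le> L p" using assms[of p] by linarith
  qed
qed

lemma coercA: "coercive LA"
proof (rule coerc_aux)
  fix p :: "real \<times> real"
  have e: "2 * LA p - ((fst p ^ 2 + snd p ^ 2) - 18) = (snd p + 3 * fst p)^2 + 2 * (fst p ^ 2 - 3)^2"
    by (simp add: LA_def power2_eq_square power4_eq_xxxx algebra_simps)
  have nn: "(snd p + 3 * fst p)^2 + 2 * (fst p ^ 2 - 3)^2 \<ge> 0" by simp
  have "0 \<le> 2 * LA p - ((fst p ^ 2 + snd p ^ 2) - 18)" by (subst e) (rule nn)
  then show "2 * LA p \<ge> fst p ^ 2 + snd p ^ 2 - 18" by linarith
qed

lemma coercB: "coercive LB"
proof (rule coerc_aux)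
  fix p :: "real \<times> real"
  have e: "2 * LB p - ((fst p ^ 2 + snd p ^ 2) - 18) = (fst p - 3 * snd p)^2 + 2 * (snd p ^ 2 - 3)^2"
    by (simp add: LB_def power2_eq_square power4_eq_xxxx algebra_simps)
  have nn: "(fst p - 3 * snd p)^2 + 2 * (snd p ^ 2 - 3)^2 \<ge> 0" by simp
  have "0 \<le> 2 * LB p - ((fst p ^ 2 + snd p ^ 2) - 18)" by (subst e) (rule nn)
  then show "2 * LB p \<ge> fst p ^ 2 + snd p ^ 2 - 18" by linarith
qed

lemma marketAB: "is_market LA LB"
  unfolding is_market_def
  by (rule exI[of _ "\<lambda>x. x^4"], rule exI[of _ "\<lambda>y. y^4"],
      rule exI[of _ "\<lambda>x y. 3*x*y + y^2 - x^2"], rule exI[of _ "\<lambda>y x. x^2 - y^2 - 3*x*y"])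
     (simp add: LA_def LB_def algebra_simps)

lemma crit_aux:
  fixes A B r s1 s2 :: real
  assumes "4 * A = 2 * r" "B + 3 * r = 0" "2 * A - r^2 = s1" "r^2 + B = s2" "s1 \<ge> 0" "s2 \<ge> 0" "r \<ge> 0"
  shows "r = 0"
  using assms by linarith

lemma crit_zero:
  fixes x y :: real
  assumes e1: "4 * x ^ 3 - 2 * x + 3 * y = 0" and e2: "4 * y ^ 3 - 2 * y - 3 * x = 0"
  shows "x = 0 \<and> y = 0"
proof -
  define r where "r = x^2 + y^2"
  have "x * (4 * x ^ 3 - 2 * x + 3 * y) + y * (4 * y ^ 3 - 2 * y - 3 * x) = 0" using e1 e2 by simp
  then have h1: "4 * (x^4 + y^4) = 2 * r" unfolding r_def
    by (simp add: algebra_simps power2_eq_square power3_eq_cube power4_eq_xxxx)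
  have "y * (4 * x ^ 3 - 2 * x + 3 * y) - x * (4 * y ^ 3 - 2 * y - 3 * x) = 0" using e1 e2 by simp
  then have h2: "4 * x * y * (x^2 - y^2) + 3 * r = 0" unfolding r_def
    by (simp add: algebra_simps power2_eq_square power3_eq_cube)
  have h3: "2 * (x^4 + y^4) - r^2 = (x^2 - y^2)^2" unfolding r_def
    by (simp add: algebra_simps power2_eq_square power4_eq_xxxx)
  have h4: "r^2 + 4 * x * y * (x^2 - y^2) = (2 * x * y + (x^2 - y^2))^2" unfolding r_def
    by (simp add: algebra_simps power2_eq_square)
  have s1: "(x^2 - y^2)^2 \<ge> 0" "(2 * x * y + (x^2 - y^2))^2 \<ge> 0" by simp_all
  have "r \<ge> 0" unfolding r_def by simp
  then have "r = 0" using crit_aux[OF h1 h2 h3 h4 s1] by blast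
  then have "x^2 + y^2 = 0" unfolding r_def by simp
  then show ?thesis by (simp add: sum_power2_eq_zero_iff)
qed

lemma critAB: "critical_point LA LB q \<longleftrightarrow> q = (0, 0)"
proof -
  obtain x y where q: "q = (x, y)" by (cases q)
  have e: "critical_point LA LB q \<longleftrightarrow> 4 * x ^ 3 - 2 * x + 3 * y = 0 \<and> 4 * y ^ 3 - 2 * y - 3 * x = 0"
    unfolding critical_point_def sim_grad_def pxA pyB q by (simp only: fst_conv snd_conv prod.inject)
  show ?thesis
  proof
    assume "critical_point LA LB q"
    then have "x = 0 \<and> y = 0" using crit_zero e by blast
    then show "q = (0, 0)" using q by simp
  next
    assume "q = (0, 0)"
    then have "x = 0" "y = 0" using q by simp_all
    then show "critical_point LA LB q" using e by simp
  qed
qed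

lemma hess0: "game_hessian LA LB (0,0) = vector [vector [-2, 3], vector [-3, -2]]"
  unfolding game_hessian_def pxpxA pypxA pxpyB pypyB by simp

lemma strictAB: "strict_max LA LB (0,0)"
  unfolding strict_max_def
proof (intro conjI allI impI)
  show "critical_point LA LB (0,0)" using critAB by simp
  fix u :: "real^2"
  assume "u \<noteq> 0"
  then have "u $ 1 \<noteq> 0 \<or> u $ 2 \<noteq> 0" by (auto simp: vec_eq_iff forall_2)
  then have pos: "(u $ 1)^2 + (u $ 2)^2 > 0"
    by (metis add_nonneg_pos add_pos_nonneg zero_le_power2 zero_less_power2)
  have "u \<bullet> (game_hessian LA LB (0,0) *v u) = -2 * ((u $ 1)^2 + (u $ 2)^2)"
    unfolding hess0
    by (simp add: inner_vec_def matrix_vector_mult_def sum_2 algebra_simps power2_eq_square)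
  then show "u \<bullet> (game_hessian LA LB (0,0) *v u) < 0" using pos by simp
qed

lemma nondegAB: "nondegenerate LA LB"
  unfolding nondegenerate_def
proof (intro allI impI)
  fix p assume "critical_point LA LB p"
  then have "p = (0,0)" using critAB by simp
  then show "invertible (game_hessian LA LB p)"
    by (simp add: hess0 invertible_det_nz det_2)
qed

theorem theorem1:
  shows "\<exists>L1 L2 :: real \<times> real \<Rightarrow> real.
     C2_fun L1 \<and> C2_fun L2 \<and>
     is_market L1 L2 \<and>
     coercive L1 \<and> coercive L2 \<and>
     real_analytic2 L1 \<and> real_analytic2 L2 \<and>
     nondegenerate L1 L2 \<and>
     (\<exists>p. strict_max L1 L2 p \<and> (\<forall>q. critical_point L1 L2 q \<longrightarrow> q = p))"
proof -
  have P: "\<exists>p. strict_max LA LB p \<and> (\<forall>q. critical_point LA LB q \<longrightarrow> q = p)"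
    by (intro exI[of _ "(0,0)"] conjI allI impI strictAB) (simp add: critAB)
  show ?thesis
    by (rule exI[of _ LA], rule exI[of _ LB], intro conjI C2A C2B marketAB coercA coercB analA analB nondegAB P)
qed

end
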